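(* Let $E$ be a nonzero real Banach space and let $f\colon E\to\,]{-}\infty,\infty]$ be proper, convex and lower semicontinuous. Then the subdifferential $\partial f\colon E\rightrightarrows E^*$ is closed, monotone and quasidense.
   Context: $E^*$ is the dual of $E$ with pairing $\langle x,x^*\rangle$. The Fenchel conjugate is $f^*(x^* )=\sup_{x\in E}[\langle x,x^*\rangle-f(x)]$, and $x^*\in\partial f(x)$ iff $f(x)+f^*(x^* )=\langle x,x^*\rangle$. For a multifunction $S\colon E\rightrightarrows E^*$ with nonempty graph $G(S)\subset E\times E^*$: $S$ is closed if $G(S)$ is norm-closed in $E\times E^*$; monotone if $\langle s-t,s^*-t^*\rangle\ge0$ for all $(s,s^* ),(t,t^* )\in G(S)$; quasidense if for every $(x,x^* )\in E\times E^*$, $\inf_{(s,s^* )\in G(S)}\big[\tfrac12\|s-x\|^2+\tfrac12\|s^*-x^*\|^2+\langle s-x,s^*-x^*\rangle\big]\le 0$. *)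

theory Defs
  imports "HOL-Analysis.Analysis"
begin

text \<open>The dual space of a real normed space E is the type E \<Rightarrow>L real of bounded
  linear functionals (with the operator norm); the pairing is blinfun_apply.
  Extended-real-valued functions f : E \<rightarrow> ]-\<infinity>,\<infinity>] are modelled as
  E \<Rightarrow> ereal never taking the value -\<infinity>.\<close>

definition proper_fun :: "('a \<Rightarrow> ereal) \<Rightarrow> bool" where
  "proper_fun f \<longleftrightarrow> (\<forall>x. f x \<noteq> -\<infinity>) \<and> (\<exists>x. f x \<noteq> \<infinity>)"

definition convex_fun :: "('a::real_vector \<Rightarrow> ereal) \<Rightarrow> bool" where
  "convex_fun f \<longleftrightarrow> (\<forall>x y t. 0 < t \<and> t < 1 \<longrightarrow>
      f ((1 - t) *\<^sub>R x + t *\<^sub>R y) \<le> ereal (1 - t) * f x + ereal t * f y)"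

definition lsc_fun :: "('a::topological_space \<Rightarrow> ereal) \<Rightarrow> bool" where
  "lsc_fun f \<longleftrightarrow> (\<forall>x c. c < f x \<longrightarrow> eventually (\<lambda>y. c < f y) (nhds x))"

definition fenchel_conj :: "('a::real_normed_vector \<Rightarrow> ereal) \<Rightarrow> ('a \<Rightarrow>\<^sub>L real) \<Rightarrow> ereal" where
  "fenchel_conj f xs = (SUP x. ereal (blinfun_apply xs x) - f x)"

definition subdiff :: "('a::real_normed_vector \<Rightarrow> ereal) \<Rightarrow> 'a \<Rightarrow> ('a \<Rightarrow>\<^sub>L real) set" where
  "subdiff f x = {xs. f x + fenchel_conj f xs = ereal (blinfun_apply xs x)}"

definition graph_mf :: "('a \<Rightarrow> 'b set) \<Rightarrow> ('a \<times> 'b) set" where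
  "graph_mf S = {(x, xs). xs \<in> S x}"

definition closed_mf :: "('a::real_normed_vector \<Rightarrow> ('a \<Rightarrow>\<^sub>L real) set) \<Rightarrow> bool" where
  "closed_mf S \<longleftrightarrow> closed (graph_mf S)"

definition monotone_mf :: "('a::real_normed_vector \<Rightarrow> ('a \<Rightarrow>\<^sub>L real) set) \<Rightarrow> bool" where
  "monotone_mf S \<longleftrightarrow> (\<forall>(s, ss) \<in> graph_mf S. \<forall>(t, ts) \<in> graph_mf S.
      blinfun_apply (ss - ts) (s - t) \<ge> 0)"

text \<open>Quasidensity; the infimum is taken in the extended reals, so an empty graph
  (infimum +\<infinity>) is never quasidense.\<close>
definition quasidense_mf :: "('a::real_normed_vector \<Rightarrow> ('a \<Rightarrow>\<^sub>L real) set) \<Rightarrow> bool" where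
  "quasidense_mf S \<longleftrightarrow> (\<forall>x xs.
      (INF p \<in> graph_mf S. ereal (norm (fst p - x) ^ 2 / 2 + norm (snd p - xs) ^ 2 / 2
          + blinfun_apply (snd p - xs) (fst p - x))) \<le> 0)"

end

theory Submission
  imports Defs
begin

definition sublin :: "('a::real_vector \<Rightarrow> real) \<Rightarrow> bool" where
  "sublin q \<longleftrightarrow> (\<forall>x y. q (x + y) \<le> q x + q y) \<and> (\<forall>c x. c \<ge> 0 \<longrightarrow> q (c *\<^sub>R x) = c * q x)"

lemma sublin_0: "sublin q \<Longrightarrow> q 0 = 0"
  unfolding sublin_def by (metis mult_zero_left order_refl scaleR_zero_left)

lemma sublin_neg: "sublin q \<Longrightarrow> - q (- x) \<le> q x"
proof -
  assume s: "sublin q"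
  have "q (x + - x) \<le> q x + q (- x)" using s unfolding sublin_def by blast
  then show ?thesis using sublin_0[OF s] by simp
qed

lemma HB_minimal:
  fixes p :: "'a::real_vector \<Rightarrow> real"
  assumes "sublin p"
  shows "\<exists>m. sublin m \<and> m \<le> p \<and> (\<forall>q. sublin q \<and> q \<le> m \<longrightarrow> q = m)"
proof -
  define A where "A = {q. sublin q \<and> q \<le> p}"
  define P where "P = (\<lambda>a b::'a \<Rightarrow> real. b \<le> a)"
  have po: "partial_order_on A (relation_of P A)"
    unfolding partial_order_on_def preorder_on_def refl_on_def trans_on_def antisym_on_def
      relation_of_def P_def by auto
  have ch: "\<exists>u \<in> A. \<forall>a \<in> C. P a u" if C: "C \<in> Chains (relation_of P A)" for C
  proof (cases "C = {}")
    case True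
    then show ?thesis using assms unfolding A_def by auto
  next
    case False
    have CA: "C \<subseteq> A" using C unfolding Chains_def relation_of_def by auto
    have tot: "\<And>a b. a \<in> C \<Longrightarrow> b \<in> C \<Longrightarrow> a \<le> b \<or> b \<le> a"
      using C unfolding Chains_def relation_of_def P_def by auto
    define u where "u = (\<lambda>x. Inf ((\<lambda>q. q x) ` C))"
    have bdd: "bdd_below ((\<lambda>q. q x) ` C)" for x
    proof (rule bdd_belowI[where m = "- p (- x)"])
      fix y assume "y \<in> (\<lambda>q. q x) ` C"
      then obtain q where q: "q \<in> C" "y = q x" by auto
      then have "sublin q" "q \<le> p" using CA unfolding A_def by auto
      then show "- p (- x) \<le> y" using sublin_neg[of q x] q le_funD[of q p "- x"] by auto
    qed
    have low: "u x \<le> q x" if "q \<in> C" for q x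
      unfolding u_def using that bdd by (auto intro: cInf_lower)
    have gr: "a \<le> u x" if "\<And>q. q \<in> C \<Longrightarrow> a \<le> q x" for a x
      unfolding u_def using that False by (auto intro: cInf_greatest)
    have qs: "\<And>q. q \<in> C \<Longrightarrow> sublin q" using CA unfolding A_def by auto
    have add: "u (x + y) \<le> u x + u y" for x y
    proof -
      have "u (x + y) - q2 y \<le> u x" if q2: "q2 \<in> C" for q2
      proof (rule gr)
        fix q1 assume q1: "q1 \<in> C"
        show "u (x + y) - q2 y \<le> q1 x"
        proof (cases "q1 \<le> q2")
          case True
          have "u (x + y) \<le> q1 (x + y)" using low q1 by blast
          also have "\<dots> \<le> q1 x + q1 y" using qs[OF q1] unfolding sublin_def by blast
          also have "\<dots> \<le> q1 x + q2 y" using True le_funD by auto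
          finally show ?thesis by simp
        next
          case False
          then have "q2 \<le> q1" using tot q1 q2 by blast
          have "u (x + y) \<le> q2 (x + y)" using low q2 by blast
          also have "\<dots> \<le> q2 x + q2 y" using qs[OF q2] unfolding sublin_def by blast
          also have "\<dots> \<le> q1 x + q2 y" using \<open>q2 \<le> q1\<close> le_funD by auto
          finally show ?thesis by simp
        qed
      qed
      then have "u (x + y) - u x \<le> q2 y" if "q2 \<in> C" for q2 using that by fastforce
      then have "u (x + y) - u x \<le> u y" by (rule gr)
      then show ?thesis by simp
    qed
    have hom: "u (c *\<^sub>R x) = c * u x" if c: "c \<ge> 0" for c x
    proof (cases "c = 0")
      case True
      have "u 0 = 0"
      proof (rule antisym)
        obtain q where "q \<in> C" using False by auto
        then show "u 0 \<le> 0" using low[of q 0] sublin_0[OF qs] by fastforce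
        show "0 \<le> u 0" by (rule gr) (simp add: sublin_0[OF qs])
      qed
      then show ?thesis using True by simp
    next
      case False
      then have cp: "c > 0" using c by simp
      have e: "\<And>q. q \<in> C \<Longrightarrow> q (c *\<^sub>R x) = c * q x" using qs c unfolding sublin_def by blast
      show ?thesis
      proof (rule antisym)
        show "c * u x \<le> u (c *\<^sub>R x)"
        proof (rule gr)
          fix q assume q: "q \<in> C"
          have "c * u x \<le> c * q x" using low[OF q] cp by (simp add: mult_left_mono)
          then show "c * u x \<le> q (c *\<^sub>R x)" using e[OF q] by simp
        qed
        have "u (c *\<^sub>R x) \<le> c * q x" if "q \<in> C" for q using low[OF that, of "c *\<^sub>R x"] e[OF that] by simp
        then have "u (c *\<^sub>R x) / c \<le> u x"
          by (intro gr) (use cp in \<open>auto simp: field_simps\<close>)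
        then show "u (c *\<^sub>R x) \<le> c * u x" using cp by (simp add: field_simps)
      qed
    qed
    have "u \<in> A"
    proof -
      obtain q where q: "q \<in> C" using False by auto
      have "u \<le> p" using low[OF q] CA q unfolding A_def by (auto simp: le_fun_def intro: order_trans)
      moreover have "sublin u" unfolding sublin_def using add hom by blast
      ultimately show ?thesis unfolding A_def by blast
    qed
    moreover have "\<forall>a \<in> C. P a u" unfolding P_def using low by (auto simp: le_fun_def)
    ultimately show ?thesis by blast
  qed
  from predicate_Zorn[OF po ch] obtain m where m: "m \<in> A" "\<forall>a\<in>A. P m a \<longrightarrow> a = m" by blast
  then show ?thesis unfolding A_def P_def by (auto intro: order_trans)
qed

lemma minimal_sublin_additive:
  fixes m :: "'a::real_vector \<Rightarrow> real"
  assumes sm: "sublin m" and mn: "\<forall>q. sublin q \<and> q \<le> m \<longrightarrow> q = m"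
  shows "m v + m x \<le> m (v + x)"
proof -
  define q where "q = (\<lambda>v. Inf ((\<lambda>t. m (v + t *\<^sub>R x) - t * m x) ` {0<..}))"
  have madd: "\<And>a b. m (a + b) \<le> m a + m b" and mhom: "\<And>c a. c \<ge> 0 \<Longrightarrow> m (c *\<^sub>R a) = c * m a"
    using sm unfolding sublin_def by auto
  have lbd: "- m (- v) \<le> m (v + t *\<^sub>R x) - t * m x" if "t > 0" for v t
  proof -
    have "m (t *\<^sub>R x) \<le> m (v + t *\<^sub>R x) + m (- v)" using madd[of "v + t *\<^sub>R x" "- v"] by simp
    then show ?thesis using mhom[of t x] that by simp
  qed
  have bdd: "bdd_below ((\<lambda>t. m (v + t *\<^sub>R x) - t * m x) ` {0<..})" for v
    using lbd by (auto intro!: bdd_belowI[where m = "- m (- v)"])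
  have low: "q v \<le> m (v + t *\<^sub>R x) - t * m x" if "t > 0" for v t
    unfolding q_def using that bdd by (auto intro!: cInf_lower)
  have gr: "a \<le> q v" if "\<And>t. t > 0 \<Longrightarrow> a \<le> m (v + t *\<^sub>R x) - t * m x" for a v
    unfolding q_def using that by (auto intro!: cInf_greatest)
  have qm: "q v \<le> m v" for v
  proof -
    have "q v \<le> m (v + 1 *\<^sub>R x) - 1 * m x" by (rule low) simp
    also have "\<dots> \<le> m v" using madd[of v x] by simp
    finally show ?thesis .
  qed
  have qadd: "q (a + b) \<le> q a + q b" for a b
  proof -
    have "q (a + b) - (m (b + s *\<^sub>R x) - s * m x) \<le> q a" if s: "s > 0" for s
    proof (rule gr)
      fix t :: real assume t: "t > 0"
      have "q (a + b) \<le> m ((a + b) + (t + s) *\<^sub>R x) - (t + s) * m x" by (rule low) (use s t in simp)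
      also have "m ((a + b) + (t + s) *\<^sub>R x) \<le> m (a + t *\<^sub>R x) + m (b + s *\<^sub>R x)"
        using madd[of "a + t *\<^sub>R x" "b + s *\<^sub>R x"] by (simp add: algebra_simps)
      finally show "q (a + b) - (m (b + s *\<^sub>R x) - s * m x) \<le> m (a + t *\<^sub>R x) - t * m x"
        by (simp add: algebra_simps)
    qed
    then have "q (a + b) - q a \<le> q b" by (intro gr) (auto simp: algebra_simps)
    then show ?thesis by simp
  qed
  have qhom: "q (c *\<^sub>R a) = c * q a" if c: "c \<ge> 0" for c a
  proof (cases "c = 0")
    case True
    have "q 0 = 0"
    proof (rule antisym)
      show "q 0 \<le> 0" using qm[of 0] sublin_0[OF sm] by simp
      show "0 \<le> q 0" by (rule gr) (use mhom in simp)
    qed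
    then show ?thesis using True by simp
  next
    case False
    then have cp: "c > 0" using c by simp
    show ?thesis
    proof (rule antisym)
      show "c * q a \<le> q (c *\<^sub>R a)"
      proof (rule gr)
        fix t :: real assume t: "t > 0"
        have "q a \<le> m (a + (t / c) *\<^sub>R x) - (t / c) * m x" by (rule low) (use t cp in simp)
        then have "c * q a \<le> c * (m (a + (t / c) *\<^sub>R x) - (t / c) * m x)" using cp by (simp add: mult_left_mono)
        also have "\<dots> = c * m (a + (t / c) *\<^sub>R x) - t * m x" using cp by (simp add: algebra_simps)
        also have "c * m (a + (t / c) *\<^sub>R x) = m (c *\<^sub>R (a + (t / c) *\<^sub>R x))" using mhom[of c] cp by simp
        also have "c *\<^sub>R (a + (t / c) *\<^sub>R x) = c *\<^sub>R a + t *\<^sub>R x" using cp by (simp add: algebra_simps)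
        finally show "c * q a \<le> m (c *\<^sub>R a + t *\<^sub>R x) - t * m x" .
      qed
      have "q (c *\<^sub>R a) / c \<le> q a"
      proof (rule gr)
        fix t :: real assume t: "t > 0"
        have "q (c *\<^sub>R a) \<le> m (c *\<^sub>R a + (c * t) *\<^sub>R x) - (c * t) * m x" by (rule low) (use t cp in simp)
        also have "c *\<^sub>R a + (c * t) *\<^sub>R x = c *\<^sub>R (a + t *\<^sub>R x)" by (simp add: algebra_simps)
        also have "m \<dots> = c * m (a + t *\<^sub>R x)" using mhom cp by simp
        finally show "q (c *\<^sub>R a) / c \<le> m (a + t *\<^sub>R x) - t * m x" using cp by (simp add: field_simps)
      qed
      then show "q (c *\<^sub>R a) \<le> c * q a" using cp by (simp add: field_simps)
    qed
  qed
  have "sublin q" unfolding sublin_def using qadd qhom by blast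
  then have "q = m" using mn qm by (auto simp: le_fun_def)
  then have "m v \<le> m (v + 1 *\<^sub>R x) - 1 * m x" using low[of 1 v] by simp
  then show ?thesis by simp
qed

lemma HB_sublinear:
  fixes p :: "'a::real_vector \<Rightarrow> real"
  assumes "sublin p"
  shows "\<exists>l. linear l \<and> (\<forall>x. l x \<le> p x)"
proof -
  obtain m where m: "sublin m" "m \<le> p" "\<forall>q. sublin q \<and> q \<le> m \<longrightarrow> q = m"
    using HB_minimal[OF assms] by blast
  have madd: "m (a + b) = m a + m b" for a b
    using minimal_sublin_additive[OF m(1) m(3), of a b] m(1) unfolding sublin_def by (meson antisym)
  have mneg: "m (- a) = - m a" for a
    using madd[of a "- a"] sublin_0[OF m(1)] by simp
  have mhom: "m (c *\<^sub>R a) = c * m a" for c a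
  proof (cases "c \<ge> 0")
    case True then show ?thesis using m(1) unfolding sublin_def by blast
  next
    case False
    have h: "\<forall>c a. c \<ge> 0 \<longrightarrow> m (c *\<^sub>R a) = c * m a" using m(1) unfolding sublin_def by blast
    have "m ((- c) *\<^sub>R a) = (- c) * m a" using h[rule_format, of "- c" a] False by linarith
    then show ?thesis using mneg[of "(- c) *\<^sub>R a"] by simp
  qed
  have "linear m" by (rule linearI) (use madd mhom in auto)
  then show ?thesis using m(2) by (auto simp: le_fun_def)
qed

lemma comb_ineq:
  fixes F \<Psi> :: "'a::real_normed_vector \<Rightarrow> real"
  assumes F: "convex_on D F" and P: "convex_on UNIV \<Psi>"
    and t1: "t1 > 0" and t2: "t2 > 0" and u1: "u1 \<in> D" and u2: "u2 \<in> D"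
  defines "\<mu> \<equiv> t1 / (t1 + t2)"
  defines "u \<equiv> (1 - \<mu>) *\<^sub>R u1 + \<mu> *\<^sub>R u2" and "t \<equiv> t1 * t2 / (t1 + t2)"
  shows "u \<in> D" "t > 0"
    "(F u + \<Psi> (u - t *\<^sub>R (va + vb)) - m) / t \<le>
      (F u1 + \<Psi> (u1 - t1 *\<^sub>R va) - m) / t1 + (F u2 + \<Psi> (u2 - t2 *\<^sub>R vb) - m) / t2"
proof -
  have mu: "0 \<le> \<mu>" "\<mu> \<le> 1" using t1 t2 unfolding \<mu>_def by auto
  have cD: "convex D" using F unfolding convex_on_def by blast
  show uD: "u \<in> D" unfolding u_def using convexD_alt[OF cD u1 u2, of \<mu>] mu
    by (simp add: algebra_simps)
  show tp: "t > 0" unfolding t_def using t1 t2 by simp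
  have e1: "(1 - \<mu>) * t1 = t" "\<mu> * t2 = t" unfolding \<mu>_def t_def using t1 t2 by (auto simp: field_simps)
  have "(1 - \<mu>) *\<^sub>R (u1 - t1 *\<^sub>R va) + \<mu> *\<^sub>R (u2 - t2 *\<^sub>R vb) = u - ((1 - \<mu>) * t1) *\<^sub>R va - (\<mu> * t2) *\<^sub>R vb"
    unfolding u_def by (simp add: algebra_simps)
  also have "\<dots> = u - t *\<^sub>R (va + vb)" unfolding e1 by (simp add: algebra_simps)
  finally have "u - t *\<^sub>R (va + vb) = (1 - \<mu>) *\<^sub>R (u1 - t1 *\<^sub>R va) + \<mu> *\<^sub>R (u2 - t2 *\<^sub>R vb)" by simp
  then have "\<Psi> (u - t *\<^sub>R (va + vb)) \<le> (1 - \<mu>) * \<Psi> (u1 - t1 *\<^sub>R va) + \<mu> * \<Psi> (u2 - t2 *\<^sub>R vb)"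
    using convex_onD[OF P, of \<mu>] mu by simp
  moreover have "F u \<le> (1 - \<mu>) * F u1 + \<mu> * F u2" unfolding u_def using convex_onD[OF F, of \<mu>] mu u1 u2 by simp
  ultimately have "F u + \<Psi> (u - t *\<^sub>R (va + vb)) - m \<le>
     (1 - \<mu>) * (F u1 + \<Psi> (u1 - t1 *\<^sub>R va) - m) + \<mu> * (F u2 + \<Psi> (u2 - t2 *\<^sub>R vb) - m)"
    by (simp add: algebra_simps)
  then have "(F u + \<Psi> (u - t *\<^sub>R (va + vb)) - m) / t \<le>
     ((1 - \<mu>) * (F u1 + \<Psi> (u1 - t1 *\<^sub>R va) - m) + \<mu> * (F u2 + \<Psi> (u2 - t2 *\<^sub>R vb) - m)) / t"
    using tp by (simp add: divide_right_mono)
  also have "\<dots> = (F u1 + \<Psi> (u1 - t1 *\<^sub>R va) - m) / t1 + (F u2 + \<Psi> (u2 - t2 *\<^sub>R vb) - m) / t2"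
  proof -
    have a: "(1 - \<mu>) / t = 1 / t1" "\<mu> / t = 1 / t2" using e1 t1 t2 tp by (auto simp: field_simps)
    have b: "(1 - \<mu>) * A / t = A / t1" "\<mu> * B / t = B / t2" for A B
      using a by (metis divide_divide_eq_right times_divide_eq_left mult.commute div_by_1)+
    show ?thesis by (simp add: add_divide_distrib b)
  qed
  finally show "(F u + \<Psi> (u - t *\<^sub>R (va + vb)) - m) / t \<le>
      (F u1 + \<Psi> (u1 - t1 *\<^sub>R va) - m) / t1 + (F u2 + \<Psi> (u2 - t2 *\<^sub>R vb) - m) / t2" .
qed

lemma sandwich:
  fixes F \<Psi> :: "'a::real_normed_vector \<Rightarrow> real"
  assumes F: "convex_on D F" and P: "convex_on UNIV \<Psi>" and x0: "x0 \<in> D"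
    and bnd: "\<forall>y. norm (y - x0) \<le> 1 \<longrightarrow> \<Psi> y \<le> M"
    and low: "\<forall>u\<in>D. m \<le> F u + \<Psi> u"
  shows "\<exists>l::'a \<Rightarrow>\<^sub>L real. \<forall>u\<in>D. \<forall>w. m \<le> F u + \<Psi> w + blinfun_apply l (w - u)"
proof -
  define g where "g v = (\<lambda>(t, u). (F u + \<Psi> (u - t *\<^sub>R v) - m) / t)" for v
  define p where "p v = Inf (g v ` ({0<..} \<times> D))" for v
  have comb: "\<exists>t>0. \<exists>u\<in>D. g (v1 + v2) (t, u) \<le> g v1 (t1, u1) + g v2 (t2, u2)"
    if "t1 > 0" "t2 > 0" "u1 \<in> D" "u2 \<in> D" for v1 v2 t1 t2 u1 u2
    using comb_ineq(1,2)[OF F P that] comb_ineq(3)[OF F P that, where va=v1 and vb=v2 and m=m] unfolding g_def prod.case by blast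
  have nn0: "0 \<le> g 0 (t, u)" if "t > 0" "u \<in> D" for t u
    using low that unfolding g_def by auto
  have lower: "- g (- v) (1, x0) \<le> g v (t, u)" if tu: "t > 0" "u \<in> D" for v t u
  proof -
    obtain t' u' where "t' > 0" "u' \<in> D" "g (v + - v) (t', u') \<le> g v (t, u) + g (- v) (1, x0)"
      using comb[OF tu(1) _ tu(2) x0, of 1 v "- v"] by auto
    then show ?thesis using nn0[of t' u'] by simp
  qed
  have bdd: "bdd_below (g v ` ({0<..} \<times> D))" for v
    using lower by (auto intro!: bdd_belowI[where m = "- g (- v) (1, x0)"])
  have ne: "g v ` ({0<..} \<times> D) \<noteq> {}" for v using x0 by auto
  have lowp: "p v \<le> g v (t, u)" if "t > 0" "u \<in> D" for v t u
    unfolding p_def using that bdd by (auto intro!: cInf_lower)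
  have grp: "a \<le> p v" if "\<And>t u. t > 0 \<Longrightarrow> u \<in> D \<Longrightarrow> a \<le> g v (t, u)" for a v
    unfolding p_def using that ne by (auto intro!: cInf_greatest)
  have padd: "p (v1 + v2) \<le> p v1 + p v2" for v1 v2
  proof -
    have "p (v1 + v2) - g v2 (t2, u2) \<le> p v1" if h2: "t2 > 0" "u2 \<in> D" for t2 u2
    proof (rule grp)
      fix t1 :: real and u1 :: 'a assume "t1 > 0" "u1 \<in> D"
      then obtain t u where "t > 0" "u \<in> D" "g (v1 + v2) (t, u) \<le> g v1 (t1, u1) + g v2 (t2, u2)"
        using comb[of t1 t2 u1 u2 v1 v2] h2 by auto
      then show "p (v1 + v2) - g v2 (t2, u2) \<le> g v1 (t1, u1)" using lowp[of t u "v1 + v2"] by simp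
    qed
    then have "p (v1 + v2) - p v1 \<le> p v2" by (intro grp) (auto simp: algebra_simps)
    then show ?thesis by simp
  qed
  have gh: "g (c *\<^sub>R v) (t, u) = c * g v (c * t, u)" if "c > 0" "t > 0" for c v t u
    unfolding g_def using that by (simp add: field_simps)
  have phom: "p (c *\<^sub>R v) = c * p v" if c: "c > 0" for c v
  proof (rule antisym)
    have "p (c *\<^sub>R v) / c \<le> p v"
    proof (rule grp)
      fix s :: real and u :: 'a assume su: "s > 0" "u \<in> D"
      have "p (c *\<^sub>R v) \<le> g (c *\<^sub>R v) (s / c, u)" by (rule lowp) (use su c in auto)
      also have "\<dots> = c * g v (s, u)" using gh[of c "s / c" v u] su c by simp
      finally show "p (c *\<^sub>R v) / c \<le> g v (s, u)" using c by (simp add: field_simps)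
    qed
    then show "p (c *\<^sub>R v) \<le> c * p v" using c by (simp add: field_simps)
    show "c * p v \<le> p (c *\<^sub>R v)"
    proof (rule grp)
      fix t :: real and u :: 'a assume tu: "t > 0" "u \<in> D"
      have "c * p v \<le> c * g v (c * t, u)" using lowp[of "c * t" u v] tu c by (simp add: mult_left_mono)
      then show "c * p v \<le> g (c *\<^sub>R v) (t, u)" using gh[OF c tu(1)] by simp
    qed
  qed
  have p0: "p 0 = 0" using phom[of 2 0] by simp
  have "sublin p" unfolding sublin_def
  proof (intro conjI allI impI)
    fix c :: real and x assume "c \<ge> 0"
    then show "p (c *\<^sub>R x) = c * p x" using phom[of c x] p0 by (cases "c = 0") auto
  qed (rule padd)
  then obtain l where l: "linear l" "\<And>x. l x \<le> p x" using HB_sublinear by blast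
  define K where "K = F x0 + M - m"
  have lK: "l v \<le> norm v * K" for v
  proof (cases "v = 0")
    case True then show ?thesis using l(1) by (simp add: linear_0)
  next
    case False
    then have nv: "norm v > 0" by simp
    have "l v \<le> p v" by (rule l(2))
    also have "\<dots> \<le> g v (1 / norm v, x0)" by (rule lowp) (use nv x0 in auto)
    also have "\<dots> = (F x0 + \<Psi> (x0 - (1 / norm v) *\<^sub>R v) - m) * norm v" unfolding g_def by simp
    also have "\<dots> \<le> (F x0 + M - m) * norm v"
    proof -
      have "\<Psi> (x0 - (1 / norm v) *\<^sub>R v) \<le> M" using bnd nv by simp
      then show ?thesis using nv by (simp add: mult_right_mono)
    qed
    finally show ?thesis unfolding K_def by (simp add: mult.commute)
  qed
  have "bounded_linear l"
  proof (rule bounded_linear_intro[where K = K])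
    show "l (x + y) = l x + l y" for x y using l(1) by (simp add: linear_add)
    show "l (r *\<^sub>R x) = r *\<^sub>R l x" for r x using l(1) by (simp add: linear_scale)
    show "norm (l x) \<le> norm x * K" for x
      using lK[of x] lK[of "- x"] l(1) by (simp add: linear_neg abs_le_iff)
  qed
  then have la: "blinfun_apply (Blinfun l) = l" by (rule bounded_linear_Blinfun_apply)
  have "m \<le> F u + \<Psi> w + l (w - u)" if "u \<in> D" for u w
  proof -
    have "l (u - w) \<le> g (u - w) (1, u)" using l(2)[of "u - w"] lowp[of 1 u "u - w"] that by simp
    moreover have "l (w - u) = - l (u - w)" using l(1) by (metis linear_neg minus_diff_eq)
    ultimately show ?thesis unfolding g_def by simp
  qed
  then show ?thesis using la by (intro exI[of _ "Blinfun l"]) auto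
qed

lemma lsc_limit:
  fixes \<phi> :: "'a::metric_space \<Rightarrow> ereal"
  assumes "lsc_fun \<phi>" "X \<longlonglongrightarrow> s" "\<forall>m\<ge>N. \<phi> (X m) \<le> ereal (g m)" "g \<longlonglongrightarrow> G"
  shows "\<phi> s \<le> ereal G"
proof (rule ccontr)
  assume "\<not> ?thesis" then have "ereal G < \<phi> s" by simp
  then obtain c where c: "ereal G < ereal c" "ereal c < \<phi> s" using ereal_dense2 by blast
  have "eventually (\<lambda>y. c < \<phi> y) (nhds s)" using assms(1) c(2) unfolding lsc_fun_def by blast
  then have e1: "eventually (\<lambda>m. c < \<phi> (X m)) sequentially" using assms(2) unfolding filterlim_iff by blast
  have e2: "eventually (\<lambda>m. g m < c) sequentially" using assms(4) c(1) by (simp add: order_tendstoD(2))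
  have "eventually (\<lambda>m::nat. False) sequentially" using e1 e2 eventually_ge_at_top[of N]
  proof eventually_elim
    case (elim m)
    then have "\<phi> (X m) \<le> ereal (g m)" using assms(3) by blast
    then show False using elim by (metis ereal_less_eq(3) less_eq_ereal_def not_less order.strict_trans)
  qed
  then show False by simp
qed

lemma small_inv: "(r::real) > 0 \<Longrightarrow> \<exists>N. inverse (real (Suc N)) < r"
proof -
  assume "r > 0"
  then obtain n where n: "n > 0" "inverse (real n) < r" using ex_inverse_of_nat_less by blast
  have "inverse (real (Suc n)) \<le> inverse (real n)" using n(1) by (simp add: le_imp_inverse_le)
  then show ?thesis using n(2) by (meson le_less_trans)
qed

lemma ekeland:
  fixes \<phi> :: "'a::complete_space \<Rightarrow> ereal"
  assumes lsc: "lsc_fun \<phi>" and bd: "\<forall>x. ereal c \<le> \<phi> x" and y0: "\<phi> y0 \<noteq> \<infinity>" and e: "e > 0"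
  shows "\<exists>s. \<phi> s \<le> \<phi> y0 \<and> (\<forall>y. \<phi> s \<le> \<phi> y + ereal (e * dist y s))"
proof -
  define D where "D = {x. \<phi> x \<noteq> \<infinity>}"
  define \<Phi> where "\<Phi> x = real_of_ereal (\<phi> x)" for x
  have fin: "\<phi> x = ereal (\<Phi> x)" if "x \<in> D" for x
  proof -
    have "\<phi> x \<noteq> - \<infinity>" using bd[rule_format, of x] by auto
    then show ?thesis using that unfolding D_def \<Phi>_def by (cases "\<phi> x") auto
  qed
  have \<Phi>c: "c \<le> \<Phi> x" if "x \<in> D" for x using bd[rule_format, of x] fin[OF that] by simp
  define S where "S x = {y\<in>D. \<Phi> y + e * dist y x \<le> \<Phi> x}" for x
  have refl: "x \<in> S x" if "x \<in> D" for x using that unfolding S_def by simp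
  have trans: "y \<in> S x" if "y \<in> S z" "z \<in> S x" for x y z
  proof -
    have "dist y x \<le> dist y z + dist z x" by (rule dist_triangle)
    then have "e * dist y x \<le> e * dist y z + e * dist z x" using e by (simp add: mult_left_mono flip: distrib_left)
    then show ?thesis using that unfolding S_def by auto
  qed
  have sub: "S z \<subseteq> S x" if "z \<in> S x" for x z using trans that by blast
  define I where "I x = Inf (\<Phi> ` S x)" for x
  have Ibdd: "bdd_below (\<Phi> ` S x)" for x using \<Phi>c unfolding S_def by (auto intro!: bdd_belowI[where m = c])
  have Ilow: "I x \<le> \<Phi> y" if "y \<in> S x" for x y unfolding I_def using that Ibdd by (auto intro!: cInf_lower)
  have nxt: "\<exists>y. y \<in> S x \<and> \<Phi> y < I x + inverse (real (Suc n))" if "x \<in> D" for x n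
  proof -
    have ne: "\<Phi> ` S x \<noteq> {}" using refl[OF that] by auto
    have "Inf (\<Phi> ` S x) < I x + inverse (real (Suc n))" unfolding I_def by simp
    from cInf_lessD[OF ne this] obtain r where "r \<in> \<Phi> ` S x" "r < I x + inverse (real (Suc n))"
      by blast
    then show ?thesis by auto
  qed
  define nx where "nx n x = (SOME y. y \<in> S x \<and> \<Phi> y < I x + inverse (real (Suc n)))" for n x
  define X where "X = rec_nat y0 nx"
  have X0: "X 0 = y0" and XS: "X (Suc n) = nx n (X n)" for n by (simp_all add: X_def)
  have XD: "X n \<in> D" for n
  proof (induction n)
    case 0 then show ?case using y0 X0 unfolding D_def by simp
  next
    case (Suc n)
    have "X (Suc n) \<in> S (X n)" unfolding XS nx_def using someI_ex[OF nxt[OF Suc]] by (rule conjunct1)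
    then show ?case unfolding S_def by blast
  qed
  have Xstep: "X (Suc n) \<in> S (X n) \<and> \<Phi> (X (Suc n)) < I (X n) + inverse (real (Suc n))" for n
    unfolding XS nx_def using someI_ex[OF nxt[OF XD]] .
  have nest: "X m \<in> S (X n)" if "n \<le> m" for n m
    using that
  proof (induction m rule: dec_induct)
    case base then show ?case using refl XD by blast
  next
    case (step m) then show ?case using trans[OF conjunct1[OF Xstep[of m]] step.IH] by blast
  qed
  have small: "e * dist y (X (Suc n)) < inverse (real (Suc n))" if "y \<in> S (X (Suc n))" for y n
  proof -
    have "y \<in> S (X n)" using subsetD[OF sub[OF conjunct1[OF Xstep[of n]]] that] .
    then have "I (X n) \<le> \<Phi> y" by (rule Ilow)
    then show ?thesis using Xstep[of n] that unfolding S_def by auto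
  qed
  have "Cauchy X" unfolding Cauchy_def
  proof (intro allI impI)
    fix r :: real assume r: "r > 0"
    obtain N where N: "inverse (real (Suc N)) < e * (r / 2)" using small_inv[of "e * (r / 2)"] e r by auto
    have d: "dist (X m) (X (Suc N)) < r / 2" if "m \<ge> Suc N" for m
    proof -
      have "e * dist (X m) (X (Suc N)) < e * (r / 2)" using small[OF nest[OF that]] N by linarith
      then show ?thesis using e by simp
    qed
    show "\<exists>M. \<forall>m\<ge>M. \<forall>n\<ge>M. dist (X m) (X n) < r"
    proof (intro exI allI impI)
      fix m n assume "Suc N \<le> m" "Suc N \<le> n"
      then have "dist (X m) (X (Suc N)) < r / 2" "dist (X n) (X (Suc N)) < r / 2" using d by auto
      then show "dist (X m) (X n) < r" using dist_triangle3[of "X m" "X n" "X (Suc N)"] dist_commute[of "X (Suc N)" "X m"] dist_commute[of "X (Suc N)" "X n"] by linarith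
    qed
  qed
  then obtain s where s: "X \<longlonglongrightarrow> s" using Cauchy_convergent_iff convergent_def by blast
  have sS: "s \<in> S (X n)" for n
  proof -
    have "\<phi> s \<le> ereal (\<Phi> (X n) - e * dist s (X n))"
    proof (rule lsc_limit[OF lsc s, where N = n])
      show "\<forall>m\<ge>n. \<phi> (X m) \<le> ereal (\<Phi> (X n) - e * dist (X m) (X n))"
      proof (intro allI impI)
        fix m assume "n \<le> m"
        then have "X m \<in> S (X n)" by (rule nest)
        then have "\<Phi> (X m) + e * dist (X m) (X n) \<le> \<Phi> (X n)" unfolding S_def by simp
        then show "\<phi> (X m) \<le> ereal (\<Phi> (X n) - e * dist (X m) (X n))" using fin[OF XD[of m]] by simp
      qed
      show "(\<lambda>m. \<Phi> (X n) - e * dist (X m) (X n)) \<longlonglongrightarrow> \<Phi> (X n) - e * dist s (X n)"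
        by (intro tendsto_diff tendsto_const tendsto_mult tendsto_dist s)
    qed
    then have sD: "s \<in> D" unfolding D_def by auto
    have "\<Phi> s \<le> \<Phi> (X n) - e * dist s (X n)" using \<open>\<phi> s \<le> _\<close> fin[OF sD] by simp
    then show ?thesis using sD unfolding S_def by simp
  qed
  have "\<phi> s \<le> \<phi> y0"
  proof -
    have "\<Phi> s + e * dist s y0 \<le> \<Phi> y0" using sS[of 0] X0 unfolding S_def by simp
    moreover have "0 \<le> e * dist s y0" using e by simp
    ultimately have "\<Phi> s \<le> \<Phi> y0" by linarith
    moreover have "s \<in> D" using sS[of 0] unfolding S_def by auto
    moreover have "y0 \<in> D" using y0 unfolding D_def by simp
    ultimately show ?thesis using fin by simp
  qed
  moreover have "\<phi> s \<le> \<phi> y + ereal (e * dist y s)" for y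
  proof (cases "y \<in> D")
    case False then show ?thesis unfolding D_def by simp
  next
    case True
    have sD: "s \<in> D" using sS[of 0] unfolding S_def by auto
    show ?thesis
    proof (rule ccontr)
      assume "\<not> ?thesis"
      then have lt: "\<Phi> y + e * dist y s < \<Phi> s" using fin[OF True] fin[OF sD] by simp
      then have yS: "y \<in> S s" using True unfolding S_def by simp
      have "y = s"
      proof (rule ccontr)
        assume "y \<noteq> s"
        then have dp: "dist y s > 0" by simp
        obtain N1 where N1: "\<forall>n\<ge>N1. dist (X n) s < dist y s / 2" using s unfolding lim_sequentially
          using half_gt_zero[OF dp] by blast
        obtain N2 where N2: "inverse (real (Suc N2)) < e * (dist y s / 2)" using small_inv[of "e * (dist y s / 2)"] e dp by auto
        define n where "n = N1 + N2"
        have "y \<in> S (X (Suc n))" using subsetD[OF sub[OF sS] yS] .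
        then have "e * dist y (X (Suc n)) < inverse (real (Suc n))" by (rule small)
        also have "\<dots> \<le> inverse (real (Suc N2))" unfolding n_def by (simp add: le_imp_inverse_le)
        finally have "e * dist y (X (Suc n)) < e * (dist y s / 2)" using N2 by linarith
        then have "dist y (X (Suc n)) < dist y s / 2" using e by simp
        moreover have "dist (X (Suc n)) s < dist y s / 2" using N1 unfolding n_def by simp
        ultimately show False using dist_triangle[of y s "X (Suc n)"] by linarith
      qed
      then show False using lt by simp
    qed
  qed
  ultimately show ?thesis by blast
qed

lemma subdiff_iff:
  fixes f :: "'a::real_normed_vector \<Rightarrow> ereal"
  assumes nm: "\<forall>x. f x \<noteq> - \<infinity>"
  shows "l \<in> subdiff f s \<longleftrightarrow> f s \<noteq> \<infinity> \<and> (\<forall>y. f s + ereal (blinfun_apply l (y - s)) \<le> f y)"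
proof
  assume a: "l \<in> subdiff f s"
  then have eq: "f s + fenchel_conj f l = ereal (blinfun_apply l s)" unfolding subdiff_def by simp
  have fs: "f s \<noteq> \<infinity>" using eq by auto
  then obtain r where r: "f s = ereal r" using nm[rule_format, of s] by (cases "f s") auto
  have "fenchel_conj f l \<noteq> \<infinity>" "fenchel_conj f l \<noteq> - \<infinity>" using eq r by auto
  then obtain c where c: "fenchel_conj f l = ereal c" by (cases "fenchel_conj f l") auto
  have c2: "c = blinfun_apply l s - r" using eq r c by simp
  have "f s + ereal (blinfun_apply l (y - s)) \<le> f y" for y
  proof -
    have "ereal (blinfun_apply l y) - f y \<le> fenchel_conj f l" unfolding fenchel_conj_def by (rule SUP_upper) simp
    then have le: "ereal (blinfun_apply l y) - f y \<le> ereal (blinfun_apply l s - r)" using c c2 by simp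
    show ?thesis
    proof (cases "f y")
      case (real q)
      then show ?thesis using le r by (simp add: blinfun.diff_right)
    qed (use nm in auto)
  qed
  then show "f s \<noteq> \<infinity> \<and> (\<forall>y. f s + ereal (blinfun_apply l (y - s)) \<le> f y)" using fs by blast
next
  assume a: "f s \<noteq> \<infinity> \<and> (\<forall>y. f s + ereal (blinfun_apply l (y - s)) \<le> f y)"
  then obtain r where r: "f s = ereal r" using nm[rule_format, of s] by (cases "f s") auto
  have "fenchel_conj f l = ereal (blinfun_apply l s - r)"
    unfolding fenchel_conj_def
  proof (rule antisym)
    show "(SUP x. ereal (blinfun_apply l x) - f x) \<le> ereal (blinfun_apply l s - r)"
    proof (rule SUP_least)
      fix y
      have le: "ereal r + ereal (blinfun_apply l (y - s)) \<le> f y" using a r by metis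
      show "ereal (blinfun_apply l y) - f y \<le> ereal (blinfun_apply l s - r)"
      proof (cases "f y")
        case (real q)
        then show ?thesis using le by (simp add: blinfun.diff_right)
      qed (use nm in auto)
    qed
    have "ereal (blinfun_apply l s) - f s \<le> (SUP x. ereal (blinfun_apply l x) - f x)" by (rule SUP_upper) simp
    then show "ereal (blinfun_apply l s - r) \<le> (SUP x. ereal (blinfun_apply l x) - f x)" using r by simp
  qed
  then show "l \<in> subdiff f s" unfolding subdiff_def using r by simp
qed

lemma convex_dom:
  fixes f :: "'a::real_vector \<Rightarrow> ereal"
  assumes cf: "convex_fun f" and nm: "\<forall>x. f x \<noteq> - \<infinity>"
  defines "D \<equiv> {x. f x \<noteq> \<infinity>}"
  shows "convex D" "convex_on D (\<lambda>x. real_of_ereal (f x))" "\<And>x. x \<in> D \<Longrightarrow> f x = ereal (real_of_ereal (f x))"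
proof -
  show fin: "\<And>x. x \<in> D \<Longrightarrow> f x = ereal (real_of_ereal (f x))"
  proof -
    fix x assume "x \<in> D"
    then show "f x = ereal (real_of_ereal (f x))" using nm[rule_format, of x] unfolding D_def by (cases "f x") auto
  qed
  have key: "f ((1 - t) *\<^sub>R x + t *\<^sub>R y) \<le> ereal ((1 - t) * real_of_ereal (f x) + t * real_of_ereal (f y))"
    if tt: "0 < t" "t < 1" "x \<in> D" "y \<in> D" for t x y
  proof -
    have "f ((1 - t) *\<^sub>R x + t *\<^sub>R y) \<le> ereal (1 - t) * f x + ereal t * f y" using cf that unfolding convex_fun_def by blast
    also have "\<dots> = ereal ((1 - t) * real_of_ereal (f x) + t * real_of_ereal (f y))"
    proof -
      obtain a b where "f x = ereal a" "f y = ereal b" using fin[OF tt(3)] fin[OF tt(4)] by blast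
      then show ?thesis by simp
    qed
    finally show ?thesis .
  qed
  show cD: "convex D" unfolding convex_alt
  proof (intro ballI allI impI)
    fix x y and u :: real assume xy: "x \<in> D" "y \<in> D" and u: "0 \<le> u \<and> u \<le> 1"
    show "(1 - u) *\<^sub>R x + u *\<^sub>R y \<in> D"
    proof (cases "u = 0 \<or> u = 1")
      case True then show ?thesis using xy by auto
    next
      case False
      then have "0 < u" "u < 1" using u by auto
      then show ?thesis using key[of u x y] xy unfolding D_def by auto
    qed
  qed
  show "convex_on D (\<lambda>x. real_of_ereal (f x))"
  proof (rule convex_onI[OF _ cD])
    fix t x y assume a: "(0::real) < t" "t < 1" "x \<in> D" "y \<in> D"
    have "(1 - t) *\<^sub>R x + t *\<^sub>R y \<in> D" using cD a unfolding convex_alt by auto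
    then have "ereal (real_of_ereal (f ((1 - t) *\<^sub>R x + t *\<^sub>R y))) \<le> ereal ((1 - t) * real_of_ereal (f x) + t * real_of_ereal (f y))"
      using key[OF a] fin by simp
    then show "real_of_ereal (f ((1 - t) *\<^sub>R x + t *\<^sub>R y)) \<le> (1 - t) * real_of_ereal (f x) + t * real_of_ereal (f y)"
      by simp
  qed
qed

lemma lsc_add_cont:
  fixes f :: "'a::metric_space \<Rightarrow> ereal"
  assumes "lsc_fun f" and "continuous_on UNIV h"
  shows "lsc_fun (\<lambda>y. f y + ereal (h y))"
  unfolding lsc_fun_def
proof (intro allI impI)
  fix x c assume "c < f x + ereal (h x)"
  then obtain c' where c': "c < ereal c'" "ereal c' < f x + ereal (h x)" using ereal_dense2 by blast
  then have "ereal (c' - h x) < f x" by (cases "f x") auto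
  then obtain w where w: "ereal (c' - h x) < ereal w" "ereal w < f x" using ereal_dense2 by blast
  have e1: "eventually (\<lambda>y. ereal w < f y) (nhds x)" using assms(1) w(2) unfolding lsc_fun_def by blast
  have "(h \<longlongrightarrow> h x) (at x)" using assms(2) unfolding continuous_on_def by simp
  then have "(h \<longlongrightarrow> h x) (nhds x)" by (simp add: tendsto_at_iff_tendsto_nhds)
  moreover have "h x - (w - (c' - h x)) < h x" using w(1) by simp
  ultimately have e2: "eventually (\<lambda>y. h x - (w - (c' - h x)) < h y) (nhds x)" by (rule order_tendstoD(1))
  show "eventually (\<lambda>y. c < f y + ereal (h y)) (nhds x)" using e1 e2
  proof eventually_elim
    case (elim y)
    then have "ereal c' < f y + ereal (h y)" by (cases "f y") auto
    then show ?case using c'(1) by (meson order.strict_trans)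
  qed
qed

lemma affine_minorant:
  fixes f :: "'a::real_normed_vector \<Rightarrow> ereal"
  assumes pf: "proper_fun f" and cf: "convex_fun f" and lf: "lsc_fun f"
  shows "\<exists>g::'a \<Rightarrow>\<^sub>L real. \<exists>b. \<forall>y. ereal (blinfun_apply g y + b) \<le> f y"
proof -
  have nm: "\<forall>x. f x \<noteq> - \<infinity>" using pf unfolding proper_fun_def by blast
  obtain x0 where x0: "f x0 \<noteq> \<infinity>" using pf unfolding proper_fun_def by blast
  define D where "D = {x. f x \<noteq> \<infinity>}"
  define Ff where "Ff x = real_of_ereal (f x)" for x
  have cD: "convex D" and cF: "convex_on D Ff" and fin: "\<And>x. x \<in> D \<Longrightarrow> f x = ereal (Ff x)"
    using convex_dom[OF cf nm] unfolding D_def Ff_def by auto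
  have x0D: "x0 \<in> D" using x0 unfolding D_def by simp
  define a where "a = Ff x0"
  have "ereal (a - 1) < f x0" using fin[OF x0D] unfolding a_def by simp
  then have "eventually (\<lambda>y. ereal (a - 1) < f y) (nhds x0)" using lf unfolding lsc_fun_def by blast
  then obtain r where r: "r > 0" "\<And>y. dist y x0 < r \<Longrightarrow> ereal (a - 1) < f y"
    unfolding eventually_nhds_metric by blast
  define \<rho> where "\<rho> = r / 2"
  have \<rho>: "\<rho> > 0" "\<rho> < r" using r unfolding \<rho>_def by auto
  have claim: "a - 1 \<le> Ff y + (1 / \<rho>) * dist x0 y" if yD: "y \<in> D" for y
  proof (cases "dist y x0 < r")
    case True
    then have "a - 1 < Ff y" using r(2)[OF True] fin[OF yD] by simp
    moreover have "0 \<le> (1 / \<rho>) * dist x0 y" using \<rho> by simp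
    ultimately show ?thesis by linarith
  next
    case False
    define R where "R = dist x0 y"
    have R: "R \<ge> r" using False unfolding R_def by (simp add: dist_commute)
    define \<tau> where "\<tau> = \<rho> / R"
    have \<tau>: "0 < \<tau>" "\<tau> < 1" using R \<rho> r unfolding \<tau>_def by auto
    define z where "z = (1 - \<tau>) *\<^sub>R x0 + \<tau> *\<^sub>R y"
    have "z - x0 = \<tau> *\<^sub>R (y - x0)" unfolding z_def by (simp add: algebra_simps)
    then have "dist z x0 = \<tau> * R" unfolding R_def using \<tau> by (simp add: dist_norm norm_minus_commute)
    also have "\<dots> = \<rho>" unfolding \<tau>_def using R r by simp
    finally have "dist z x0 < r" using \<rho> by simp
    then have fz: "ereal (a - 1) < f z" by (rule r(2))
    have zD: "z \<in> D" using cD x0D yD \<tau> unfolding z_def convex_alt by auto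
    have "Ff z \<le> (1 - \<tau>) * Ff x0 + \<tau> * Ff y" unfolding z_def using convex_onD[OF cF, of \<tau> x0 y] \<tau> x0D yD by simp
    moreover have "a - 1 < Ff z" using fz fin[OF zD] by simp
    ultimately have "\<tau> * (a - Ff y) < 1" unfolding a_def by (simp add: algebra_simps)
    then have "a - Ff y < 1 / \<tau>" using \<tau> by (simp add: field_simps)
    also have "1 / \<tau> = (1 / \<rho>) * R" unfolding \<tau>_def using \<rho> R r by simp
    finally show ?thesis unfolding R_def by simp
  qed
  have cP: "convex_on UNIV (\<lambda>y. (1 / \<rho>) * dist x0 y)" using \<rho> by (intro convex_on_cmul convex_on_dist) auto
  have bnd: "\<forall>y. norm (y - x0) \<le> 1 \<longrightarrow> (1 / \<rho>) * dist x0 y \<le> 1 / \<rho>"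
    using \<rho> by (auto simp: dist_norm norm_minus_commute divide_right_mono)
  obtain l :: "'a \<Rightarrow>\<^sub>L real" where l: "\<forall>u\<in>D. \<forall>w. a - 1 \<le> Ff u + (1 / \<rho>) * dist x0 w + blinfun_apply l (w - u)"
    using sandwich[OF cF cP x0D bnd, of "a - 1"] claim by blast
  have "ereal (blinfun_apply l y + (a - 1 - blinfun_apply l x0)) \<le> f y" for y
  proof (cases "y \<in> D")
    case True
    have "a - 1 \<le> Ff y + (1 / \<rho>) * dist x0 x0 + blinfun_apply l (x0 - y)" using l True by blast
    then have "a - 1 \<le> Ff y + blinfun_apply l (x0 - y)" by simp
    then show ?thesis using fin[OF True] by (simp add: blinfun.diff_right)
  next
    case False then show ?thesis unfolding D_def by simp
  qed
  then show ?thesis by blast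
qed

lemma subdiff_monotone:
  fixes f :: "'a::real_normed_vector \<Rightarrow> ereal"
  assumes nm: "\<forall>x. f x \<noteq> - \<infinity>"
  shows "monotone_mf (subdiff f)"
proof -
  have *: "0 \<le> blinfun_apply (ss - ts) (s - t)" if a: "ss \<in> subdiff f s" "ts \<in> subdiff f t" for s ss t ts
  proof -
  have 1: "f s \<noteq> \<infinity>" "f s + ereal (blinfun_apply ss (t - s)) \<le> f t" using a(1) subdiff_iff[OF nm] by blast+
  have 2: "f t \<noteq> \<infinity>" "f t + ereal (blinfun_apply ts (s - t)) \<le> f s" using a(2) subdiff_iff[OF nm] by blast+
  obtain p where p: "f s = ereal p" using 1(1) nm by (cases "f s") auto
  obtain q where q: "f t = ereal q" using 2(1) nm by (cases "f t") auto
  note pq = p q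
  have "blinfun_apply ss (t - s) + blinfun_apply ts (s - t) \<le> 0" using 1(2) 2(2) pq by simp
  moreover have "blinfun_apply ss (t - s) = - blinfun_apply ss (s - t)" by (metis blinfun.minus_right minus_diff_eq)
  ultimately show "0 \<le> blinfun_apply (ss - ts) (s - t)" by (simp add: blinfun.diff_left)
  qed
  show ?thesis unfolding monotone_mf_def graph_mf_def using * by auto
qed

lemma subdiff_closed:
  fixes f :: "'a::real_normed_vector \<Rightarrow> ereal"
  assumes pf: "proper_fun f" and lf: "lsc_fun f"
  shows "closed_mf (subdiff f)"
  unfolding closed_mf_def closed_sequential_limits
proof (intro allI impI, elim conjE)
  fix P :: "nat \<Rightarrow> 'a \<times> ('a \<Rightarrow>\<^sub>L real)" and L assume PG: "\<forall>n. P n \<in> graph_mf (subdiff f)" and PL: "P \<longlonglongrightarrow> L"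
  have nm: "\<forall>x. f x \<noteq> - \<infinity>" using pf unfolding proper_fun_def by blast
  obtain s l where L: "L = (s, l)" by (cases L)
  define X where "X n = fst (P n)" for n
  define Y where "Y n = snd (P n)" for n
  have Xs: "X \<longlonglongrightarrow> s" unfolding X_def using tendsto_fst[OF PL] L by simp
  have Yl: "Y \<longlonglongrightarrow> l" unfolding Y_def using tendsto_snd[OF PL] L by simp
  have sub: "Y n \<in> subdiff f (X n)" for n using PG[rule_format, of n] unfolding graph_mf_def X_def Y_def by (cases "P n") auto
  have ineq: "f s + ereal (blinfun_apply l (y - s)) \<le> f y \<and> f s \<noteq> \<infinity>" if fy: "f y = ereal r" for y r
  proof -
    have "f s \<le> ereal (r - blinfun_apply l (y - s))"
    proof (rule lsc_limit[OF lf Xs, where N = 0])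
      show "\<forall>m\<ge>0. f (X m) \<le> ereal (r - blinfun_apply (Y m) (y - X m))"
      proof (intro allI impI)
        fix m :: nat
        have "f (X m) \<noteq> \<infinity>" "f (X m) + ereal (blinfun_apply (Y m) (y - X m)) \<le> f y"
          using sub[of m] subdiff_iff[OF nm] by blast+
        then show "f (X m) \<le> ereal (r - blinfun_apply (Y m) (y - X m))" using fy nm
          by (cases "f (X m)") auto
      qed
      show "(\<lambda>m. r - blinfun_apply (Y m) (y - X m)) \<longlonglongrightarrow> r - blinfun_apply l (y - s)"
        by (intro tendsto_diff tendsto_const blinfun.tendsto Yl Xs)
    qed
    then show ?thesis using nm fy by (cases "f s") auto
  qed
  obtain y0 where y0: "f y0 \<noteq> \<infinity>" using pf unfolding proper_fun_def by blast
  then obtain r0 where "f y0 = ereal r0" using nm by (cases "f y0") auto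
  then have fs: "f s \<noteq> \<infinity>" using ineq by blast
  have "f s + ereal (blinfun_apply l (y - s)) \<le> f y" for y
  proof (cases "f y")
    case (real r) then show ?thesis using ineq by blast
  qed (use nm in auto)
  then have "l \<in> subdiff f s" using fs subdiff_iff[OF nm] by blast
  then show "L \<in> graph_mf (subdiff f)" unfolding graph_mf_def L by simp
qed

lemma convex_half_sq:
  fixes x :: "'a::real_normed_vector"
  shows "convex_on UNIV (\<lambda>y. (norm (y - x))\<^sup>2 / 2)"
proof (rule convex_onI)
  fix t :: real and a b :: 'a assume t: "0 < t" "t < 1"
  have "(1 - t) *\<^sub>R a + t *\<^sub>R b - x = (1 - t) *\<^sub>R (a - x) + t *\<^sub>R (b - x)" by (simp add: algebra_simps)
  then have "norm ((1 - t) *\<^sub>R a + t *\<^sub>R b - x) \<le> (1 - t) * norm (a - x) + t * norm (b - x)"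
    using norm_triangle_ineq[of "(1 - t) *\<^sub>R (a - x)" "t *\<^sub>R (b - x)"] t by simp
  then have "(norm ((1 - t) *\<^sub>R a + t *\<^sub>R b - x))\<^sup>2 \<le> ((1 - t) * norm (a - x) + t * norm (b - x))\<^sup>2"
    by (rule power_mono) simp
  also have "\<dots> \<le> (1 - t) * (norm (a - x))\<^sup>2 + t * (norm (b - x))\<^sup>2"
  proof -
    have "(1 - t) * (norm (a - x))\<^sup>2 + t * (norm (b - x))\<^sup>2 - ((1 - t) * norm (a - x) + t * norm (b - x))\<^sup>2
       = t * (1 - t) * (norm (a - x) - norm (b - x))\<^sup>2" by (simp add: power2_eq_square algebra_simps)
    moreover have "0 \<le> t * (1 - t) * (norm (a - x) - norm (b - x))\<^sup>2" using t by simp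
    ultimately show ?thesis by linarith
  qed
  finally show "(norm ((1 - t) *\<^sub>R a + t *\<^sub>R b - x))\<^sup>2 / 2 \<le> (1 - t) * ((norm (a - x))\<^sup>2 / 2) + t * ((norm (b - x))\<^sup>2 / 2)"
    by simp
qed simp

lemma convex_blinfun_neg:
  fixes l :: "'a::real_normed_vector \<Rightarrow>\<^sub>L real"
  shows "convex_on UNIV (\<lambda>y. - blinfun_apply l y)"
proof (rule convex_onI)
  fix t :: real and x y :: 'a
  show "- blinfun_apply l ((1 - t) *\<^sub>R x + t *\<^sub>R y) \<le> (1 - t) * - blinfun_apply l x + t * - blinfun_apply l y"
    by (simp only: blinfun.add_right blinfun.scaleR_right) simp
qed simp

lemma eps_le:
  fixes a b c :: real
  assumes "\<And>t. 0 < t \<Longrightarrow> t \<le> 1 \<Longrightarrow> a \<le> b + t * c"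
  shows "a \<le> b"
proof (rule ccontr)
  assume "\<not> a \<le> b"
  then have ab: "a > b" by simp
  show False
  proof (cases "c \<le> 0")
    case True
    then show False using assms[of 1] ab by simp
  next
    case False
    define t where "t = min 1 ((a - b) / (2 * c))"
    have t: "0 < t" "t \<le> 1" using ab False unfolding t_def by auto
    have "t * c \<le> (a - b) / (2 * c) * c" unfolding t_def using False by (intro mult_right_mono) auto
    also have "\<dots> = (a - b) / 2" using False by simp
    moreover have "(a - b) / 2 < a - b" using ab by simp
    ultimately show False using assms[OF t] ab by linarith
  qed
qed

lemma quasi_point:
  fixes f :: "'a::banach \<Rightarrow> ereal"
  assumes pf: "proper_fun f" and cf: "convex_fun f" and lf: "lsc_fun f" and \<epsilon>: "\<epsilon> > 0"
  shows "\<exists>s l. l \<in> subdiff f s \<and>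
    (norm (s - x))\<^sup>2 / 2 + (norm (l - xs))\<^sup>2 / 2 + blinfun_apply (l - xs) (s - x) < \<epsilon>"
proof -
  have nm: "\<forall>x. f x \<noteq> - \<infinity>" using pf unfolding proper_fun_def by blast
  define D where "D = {x. f x \<noteq> \<infinity>}"
  define Ff where "Ff x = real_of_ereal (f x)" for x
  have cD: "convex D" and cF: "convex_on D Ff" and fin: "\<And>x. x \<in> D \<Longrightarrow> f x = ereal (Ff x)"
    using convex_dom[OF cf nm] unfolding D_def Ff_def by auto
  obtain g :: "'a \<Rightarrow>\<^sub>L real" and b where gb: "\<And>y. ereal (blinfun_apply g y + b) \<le> f y"
    using affine_minorant[OF pf cf lf] by blast
  obtain y0 where y0: "y0 \<in> D" using pf unfolding proper_fun_def D_def by blast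
  define h where "h y = (norm (y - x))\<^sup>2 / 2 - blinfun_apply xs y" for y
  define \<phi> where "\<phi> y = f y + ereal (h y)" for y
  have ch: "continuous_on UNIV h" unfolding h_def by (intro continuous_intros blinfun.continuous_on) auto
  have l\<phi>: "lsc_fun \<phi>" unfolding \<phi>_def by (rule lsc_add_cont[OF lf ch])
  define K where "K = norm (g - xs)"
  define k0 where "k0 = blinfun_apply (g - xs) x"
  have lowb: "b + k0 - K\<^sup>2 + (norm (y - x))\<^sup>2 / 4 \<le> Ff y + h y" if yD: "y \<in> D" for y
  proof -
    have "blinfun_apply g y + b \<le> Ff y" using gb[of y] fin[OF yD] by simp
    moreover have "blinfun_apply (g - xs) y = k0 + blinfun_apply (g - xs) (y - x)"
      unfolding k0_def by (simp add: blinfun.diff_right)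
    moreover have "- (K * norm (y - x)) \<le> blinfun_apply (g - xs) (y - x)"
      using norm_blinfun[of "g - xs" "y - x"] unfolding K_def by (simp add: abs_le_iff)
    moreover have "0 \<le> (norm (y - x) / 2 - K)\<^sup>2" by simp
    ultimately show ?thesis unfolding h_def by (simp add: blinfun.diff_left power2_eq_square algebra_simps)
  qed
  define c where "c = b + k0 - K\<^sup>2"
  have bd: "\<forall>y. ereal c \<le> \<phi> y"
  proof
    fix y show "ereal c \<le> \<phi> y"
    proof (cases "y \<in> D")
      case True
      have "c \<le> Ff y + h y" using lowb[OF True] unfolding c_def by (smt (verit) zero_le_power2 divide_nonneg_pos)
      then show ?thesis unfolding \<phi>_def using fin[OF True] by simp
    next
      case False then show ?thesis unfolding \<phi>_def D_def by simp
    qed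
  qed
  define A where "A = Ff y0 + h y0"
  have \<phi>y0: "\<phi> y0 = ereal A" unfolding \<phi>_def A_def using fin[OF y0] by simp
  define B where "B = A - c"
  have B0: "0 \<le> B" using lowb[OF y0] unfolding B_def A_def c_def by (smt (verit) zero_le_power2 divide_nonneg_pos)
  define R where "R = sqrt (4 * B)"
  have R0: "0 \<le> R" unfolding R_def using B0 by simp
  define e where "e = min 1 (\<epsilon> / (2 * R + 1))"
  have e: "0 < e" "e \<le> 1" "e * (2 * R + 1) \<le> \<epsilon>"
  proof -
    show "0 < e" "e \<le> 1" unfolding e_def using \<epsilon> R0 by auto
    have "e \<le> \<epsilon> / (2 * R + 1)" unfolding e_def by simp
    then have "e * (2 * R + 1) \<le> \<epsilon> / (2 * R + 1) * (2 * R + 1)" using R0 by (intro mult_right_mono) auto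
    then show "e * (2 * R + 1) \<le> \<epsilon>" using R0 by simp
  qed
  obtain s where s1: "\<phi> s \<le> \<phi> y0" and s2: "\<forall>y. \<phi> s \<le> \<phi> y + ereal (e * dist y s)"
    using ekeland[OF l\<phi> bd _ e(1), of y0] \<phi>y0 by auto
  have sD: "s \<in> D" using s1 \<phi>y0 unfolding \<phi>_def D_def by auto
  have sA: "Ff s + h s \<le> A" using s1 \<phi>y0 fin[OF sD] unfolding \<phi>_def by simp
  define z where "z = s - x"
  have zR: "norm z \<le> R"
  proof -
    have "(norm z)\<^sup>2 \<le> 4 * B" using lowb[OF sD] sA unfolding B_def c_def z_def by simp
    then show ?thesis unfolding R_def using real_le_rsqrt by blast
  qed
  define \<Psi> where "\<Psi> w = h w + e * dist s w" for w
  have c\<Psi>: "convex_on UNIV \<Psi>"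
  proof -
    have "convex_on UNIV (\<lambda>w. ((norm (w - x))\<^sup>2 / 2 + - blinfun_apply xs w) + e * dist s w)"
      by (intro convex_on_add convex_on_cmul convex_half_sq convex_blinfun_neg convex_on_dist) (use e in auto)
    moreover have "\<Psi> = (\<lambda>w. ((norm (w - x))\<^sup>2 / 2 + - blinfun_apply xs w) + e * dist s w)"
      unfolding \<Psi>_def h_def by (auto simp: fun_eq_iff)
    ultimately show ?thesis by simp
  qed
  define M where "M = (R + 1)\<^sup>2 / 2 + norm xs * (norm s + 1) + e"
  have bnd: "\<forall>w. norm (w - s) \<le> 1 \<longrightarrow> \<Psi> w \<le> M"
  proof (intro allI impI)
    fix w assume w: "norm (w - s) \<le> 1"
    have "norm (w - x) \<le> norm (w - s) + norm (s - x)" using norm_triangle_ineq[of "w - s" "s - x"] by simp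
    then have "norm (w - x) \<le> R + 1" using w zR unfolding z_def by simp
    then have 1: "(norm (w - x))\<^sup>2 \<le> (R + 1)\<^sup>2" by (rule power_mono) simp
    have "norm w \<le> norm s + 1" using norm_triangle_ineq[of "w - s" s] w by simp
    then have "- blinfun_apply xs w \<le> norm xs * (norm s + 1)"
      using norm_blinfun[of xs w] by (smt (verit) mult_left_mono norm_ge_zero real_norm_def abs_le_iff)
    moreover have "e * dist s w \<le> e" using w e by (simp add: dist_norm norm_minus_commute)
    ultimately show "\<Psi> w \<le> M" unfolding \<Psi>_def h_def M_def using 1 by simp
  qed
  have low: "\<forall>u\<in>D. Ff s + h s \<le> Ff u + \<Psi> u"
  proof
    fix u assume uD: "u \<in> D"
    have "\<phi> s \<le> \<phi> u + ereal (e * dist u s)" using s2 by blast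
    then show "Ff s + h s \<le> Ff u + \<Psi> u" unfolding \<phi>_def \<Psi>_def using fin[OF sD] fin[OF uD]
      by (simp add: dist_commute)
  qed
  have low': "\<forall>u\<in>D. Ff s + h s \<le> Ff u + \<Psi> u" using low by simp
  obtain l :: "'a \<Rightarrow>\<^sub>L real" where l: "\<forall>u\<in>D. \<forall>w. Ff s + h s \<le> Ff u + \<Psi> w + blinfun_apply l (w - u)"
    using sandwich[OF cF c\<Psi> sD bnd low'] by blast
  have lsub: "l \<in> subdiff f s"
  proof -
    have "f s + ereal (blinfun_apply l (y - s)) \<le> f y" for y
    proof (cases "y \<in> D")
      case True
      have "Ff s + h s \<le> Ff y + \<Psi> s + blinfun_apply l (s - y)" using l True by blast
      moreover have "blinfun_apply l (s - y) = - blinfun_apply l (y - s)" by (metis blinfun.minus_right minus_diff_eq)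
      ultimately have "Ff s + blinfun_apply l (y - s) \<le> Ff y" unfolding \<Psi>_def by simp
      then show ?thesis using fin[OF True] fin[OF sD] by simp
    next
      case False then show ?thesis unfolding D_def by simp
    qed
    then show ?thesis using subdiff_iff[OF nm] sD unfolding D_def by blast
  qed
  define d where "d = l - xs"
  have key: "(norm z)\<^sup>2 / 2 \<le> (norm (w - x))\<^sup>2 / 2 + e * norm (w - s) + blinfun_apply d (w - s)" for w
  proof -
    have "Ff s + h s \<le> Ff s + \<Psi> w + blinfun_apply l (w - s)" using l sD by blast
    then show ?thesis unfolding \<Psi>_def h_def d_def z_def
      by (simp add: blinfun.diff_left blinfun.diff_right dist_norm norm_minus_commute algebra_simps)
  qed
  have dv: "- blinfun_apply d v \<le> (norm z + e) * norm v" for v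
  proof (rule eps_le[where c = "(norm v)\<^sup>2 / 2"])
    fix t :: real assume t: "0 < t" "t \<le> 1"
    have k: "(norm z)\<^sup>2 / 2 \<le> (norm (z + t *\<^sub>R v))\<^sup>2 / 2 + e * (t * norm v) + t * blinfun_apply d v"
      using key[of "s + t *\<^sub>R v"] t unfolding z_def by (simp add: blinfun.scaleR_right algebra_simps)
    have "norm (z + t *\<^sub>R v) \<le> norm z + t * norm v" using norm_triangle_ineq[of z "t *\<^sub>R v"] t by simp
    then have "(norm (z + t *\<^sub>R v))\<^sup>2 \<le> (norm z + t * norm v)\<^sup>2" by (rule power_mono) simp
    then have "0 \<le> t * ((norm z + e) * norm v + t * ((norm v)\<^sup>2 / 2) + blinfun_apply d v)"
      using k by (simp add: power2_eq_square algebra_simps)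
    then have "0 \<le> (norm z + e) * norm v + t * ((norm v)\<^sup>2 / 2) + blinfun_apply d v"
      using t by (simp add: zero_le_mult_iff)
    then show "- blinfun_apply d v \<le> (norm z + e) * norm v + t * ((norm v)\<^sup>2 / 2)" by simp
  qed
  have nd: "norm d \<le> norm z + e"
  proof (rule norm_blinfun_bound)
    show "0 \<le> norm z + e" using e by simp
    fix v
    have "blinfun_apply d v \<le> (norm z + e) * norm v" using dv[of "- v"] by (simp add: blinfun.minus_right)
    then show "norm (blinfun_apply d v) \<le> (norm z + e) * norm v" using dv[of v] by simp
  qed
  have dz: "blinfun_apply d z \<le> - (norm z)\<^sup>2 + e * norm z"
  proof (rule eps_le[where c = "(norm z)\<^sup>2 / 2"])
    fix t :: real assume t: "0 < t" "t \<le> 1"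
    have k: "(norm z)\<^sup>2 / 2 \<le> (norm ((1 - t) *\<^sub>R z))\<^sup>2 / 2 + e * norm (t *\<^sub>R z) - t * blinfun_apply d z"
    proof -
      have w1: "s - t *\<^sub>R z - x = (1 - t) *\<^sub>R z" unfolding z_def by (simp add: algebra_simps)
      have w2: "s - t *\<^sub>R z - s = - (t *\<^sub>R z)" by simp
      show ?thesis using key[of "s - t *\<^sub>R z"] unfolding w1 w2
        by (simp only: norm_minus_cancel blinfun.minus_right blinfun.scaleR_right) simp
    qed
    have e1: "(norm ((1 - t) *\<^sub>R z))\<^sup>2 = (1 - t)\<^sup>2 * (norm z)\<^sup>2" using t by (simp add: power_mult_distrib)
    have e2: "norm (t *\<^sub>R z) = t * norm z" using t by simp
    have k2: "(norm z)\<^sup>2 / 2 \<le> (1 - t)\<^sup>2 * (norm z)\<^sup>2 / 2 + e * (t * norm z) - t * blinfun_apply d z"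
      using k unfolding e1 e2 .
    define N where "N = norm z"
    define Q where "Q = blinfun_apply d z"
    have k3: "N\<^sup>2 / 2 \<le> (1 - t)\<^sup>2 * N\<^sup>2 / 2 + e * (t * N) - t * Q" using k2 unfolding N_def Q_def .
    have "t * (- N\<^sup>2 + e * N + t * (N\<^sup>2 / 2) - Q) = (1 - t)\<^sup>2 * N\<^sup>2 / 2 + e * (t * N) - t * Q - N\<^sup>2 / 2"
      by (simp add: power2_eq_square field_simps)
    then have "0 \<le> t * (- N\<^sup>2 + e * N + t * (N\<^sup>2 / 2) - Q)" using k3 by linarith
    then have "0 \<le> t * (- (norm z)\<^sup>2 + e * norm z + t * ((norm z)\<^sup>2 / 2) - blinfun_apply d z)"
      unfolding N_def Q_def .
    then have "0 \<le> - (norm z)\<^sup>2 + e * norm z + t * ((norm z)\<^sup>2 / 2) - blinfun_apply d z"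
      using t by (simp add: zero_le_mult_iff)
    then show "blinfun_apply d z \<le> - (norm z)\<^sup>2 + e * norm z + t * ((norm z)\<^sup>2 / 2)" by simp
  qed
  have "(norm d)\<^sup>2 \<le> (norm z + e)\<^sup>2" using nd by (rule power_mono) simp
  then have "(norm z)\<^sup>2 / 2 + (norm d)\<^sup>2 / 2 + blinfun_apply d z \<le> 2 * e * norm z + e\<^sup>2 / 2"
    using dz by (simp add: power2_eq_square algebra_simps)
  also have "\<dots> \<le> 2 * e * R + e / 2"
  proof -
    have "2 * e * norm z \<le> 2 * e * R" using zR e by simp
    moreover have "e\<^sup>2 \<le> e" using e by (simp add: power2_eq_square mult_le_cancel_left1)
    ultimately show ?thesis by simp
  qed
  also have "\<dots> < \<epsilon>" using e by (simp add: algebra_simps)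
  finally show ?thesis using lsub unfolding d_def z_def by blast
qed

theorem theorem2p14:
  fixes f :: "'a::banach \<Rightarrow> ereal"
  assumes "\<exists>x::'a. x \<noteq> 0"
    and "proper_fun f" and "convex_fun f" and "lsc_fun f"
  shows "closed_mf (subdiff f) \<and> monotone_mf (subdiff f) \<and> quasidense_mf (subdiff f)"
proof -
  have pf: "proper_fun f" and cf: "convex_fun f" and lf: "lsc_fun f" using assms by auto
  have nm: "\<forall>x. f x \<noteq> - \<infinity>" using pf unfolding proper_fun_def by blast
  have qd: "quasidense_mf (subdiff f)" unfolding quasidense_mf_def
  proof (intro allI)
    fix x :: 'a and xs :: "'a \<Rightarrow>\<^sub>L real"
    show "(INF p \<in> graph_mf (subdiff f). ereal ((norm (fst p - x))\<^sup>2 / 2 + (norm (snd p - xs))\<^sup>2 / 2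
          + blinfun_apply (snd p - xs) (fst p - x))) \<le> 0"
      unfolding INF_le_iff
    proof (intro allI impI)
      fix y :: ereal assume "0 < y"
      then obtain \<epsilon> where \<epsilon>: "0 < ereal \<epsilon>" "ereal \<epsilon> < y" using ereal_dense2 by blast
      then have "\<epsilon> > 0" by simp
      then obtain s l where sl: "l \<in> subdiff f s"
        "(norm (s - x))\<^sup>2 / 2 + (norm (l - xs))\<^sup>2 / 2 + blinfun_apply (l - xs) (s - x) < \<epsilon>"
        using quasi_point[OF pf cf lf] by blast
      have "(s, l) \<in> graph_mf (subdiff f)" using sl(1) unfolding graph_mf_def by simp
      moreover have "ereal ((norm (fst (s, l) - x))\<^sup>2 / 2 + (norm (snd (s, l) - xs))\<^sup>2 / 2
          + blinfun_apply (snd (s, l) - xs) (fst (s, l) - x)) < y"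
      proof -
        have "ereal ((norm (s - x))\<^sup>2 / 2 + (norm (l - xs))\<^sup>2 / 2 + blinfun_apply (l - xs) (s - x)) < ereal \<epsilon>"
          using sl(2) by simp
        from less_trans[OF this \<epsilon>(2)] show ?thesis by simp
      qed
      ultimately show "\<exists>i\<in>graph_mf (subdiff f). ereal ((norm (fst i - x))\<^sup>2 / 2 + (norm (snd i - xs))\<^sup>2 / 2
          + blinfun_apply (snd i - xs) (fst i - x)) < y" by blast
    qed
  qed
  show ?thesis using subdiff_closed[OF pf lf] subdiff_monotone[OF nm] qd by blast
qed

end
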